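(* Consider the two-bidder simultaneous sealed-bid auction of $n\ge2$ objects described in the context. Suppose ${\mathcal B}$'s random bid vector $(b_1,\dots,b_n)$ satisfies $\sum_i b_i=1$ and each $b_i$ has cumulative distribution function $F_2$, where $F_2(x)=\frac{n}{2}x$ for $x\in[0,\frac{2}{n}]$ and $F_2(x)=1$ for $x\in(\frac2n,1]$. Then the maximum, over all (possibly randomized, independent of ${\mathcal B}$'s bids) bid vectors $(a_1,\dots,a_n)$ of ${\mathcal A}$ with positive entries and $\sum a_i\le 1$, of the expected number of objects won by ${\mathcal A}$ equals exactly $n/2$.
   Context: Auction model: $n$ objects are auctioned simultaneously to two bidders ${\mathcal B}$ and ${\mathcal A}$; each has budget $1$ and submits a vector of bids (one per object) with sum at most $1$. Each object is won by the higher bidder on it; in case of a tie each wins with probability $1/2$. ${\mathcal A}$ knows ${\mathcal B}$'s bidding algorithm (the distribution of his bids) but not the realized bids. *)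

theory Defs
  imports "HOL-Probability.Probability"
begin

text \<open>Bid vectors of n objects are functions nat => real, meaningful on {..<n};
  the measurable space of bid vectors is the product of Borel spaces.\<close>

definition bid_space :: "nat \<Rightarrow> (nat \<Rightarrow> real) measure" where
  "bid_space n = PiM {..<n} (\<lambda>_. borel)"

definition F2 :: "nat \<Rightarrow> real \<Rightarrow> real" where
  "F2 n x = (if x < 0 then 0 else if x \<le> 2 / real n then real n / 2 * x else 1)"

text \<open>Number of objects won by A (ties count 1/2, i.e. the expected value of the coin flip).\<close>
definition objects_won :: "nat \<Rightarrow> (nat \<Rightarrow> real) \<Rightarrow> (nat \<Rightarrow> real) \<Rightarrow> real" where
  "objects_won n a b = (\<Sum>i<n. if b i < a i then 1 else if a i = b i then 1 / 2 else 0)"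

definition A_strategy :: "nat \<Rightarrow> (nat \<Rightarrow> real) measure \<Rightarrow> bool" where
  "A_strategy n N \<longleftrightarrow> prob_space N \<and> sets N = sets (bid_space n) \<and>
     (AE a in N. (\<forall>i<n. 0 < a i) \<and> (\<Sum>i<n. a i) \<le> 1)"

definition expected_win :: "nat \<Rightarrow> (nat \<Rightarrow> real) measure \<Rightarrow> (nat \<Rightarrow> real) measure \<Rightarrow> real" where
  "expected_win n N M = (\<integral>ab. objects_won n (fst ab) (snd ab) \<partial>(N \<Otimes>\<^sub>M M))"

end

theory Submission
  imports Defs
begin

lemma ow_bounds: "0 \<le> objects_won n a b \<and> objects_won n a b \<le> real n"
proof -
  have "objects_won n a b \<le> (\<Sum>i<n. 1)" unfolding objects_won_def
    by (intro sum_mono) auto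
  moreover have "0 \<le> objects_won n a b" unfolding objects_won_def
    by (intro sum_nonneg) auto
  ultimately show ?thesis by simp
qed

lemma ow_meas: "(\<lambda>ab. objects_won n (fst ab) (snd ab)) \<in> borel_measurable (bid_space n \<Otimes>\<^sub>M bid_space n)"
  unfolding objects_won_def bid_space_def by measurable

lemma ow_meas2: "(\<lambda>b. objects_won n a b) \<in> borel_measurable (bid_space n)"
  unfolding objects_won_def bid_space_def by measurable

lemma pps: "prob_space N \<Longrightarrow> prob_space M \<Longrightarrow> pair_prob_space N M"
  unfolding pair_prob_space_def pair_sigma_finite_def
  by (auto intro: prob_space_imp_sigma_finite)

lemma fubini:
  assumes N: "prob_space N" "sets N = sets (bid_space n)"
    and M: "prob_space M" "sets M = sets (bid_space n)"
  shows "expected_win n N M = (\<integral>a. (\<integral>b. objects_won n a b \<partial>M) \<partial>N)"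
    and "integrable N (\<lambda>a. (\<integral>b. objects_won n a b \<partial>M))"
proof -
  interpret P: pair_prob_space N M using pps N M by blast
  have meas: "(\<lambda>ab. objects_won n (fst ab) (snd ab)) \<in> borel_measurable (N \<Otimes>\<^sub>M M)"
    using ow_meas[of n] measurable_cong_sets[OF sets_pair_measure_cong[OF N(2) M(2)] refl] by blast
  have int: "integrable (N \<Otimes>\<^sub>M M) (\<lambda>ab. objects_won n (fst ab) (snd ab))"
    by (rule P.P.integrable_const_bound[where B="real n"]) (use ow_bounds meas in auto)
  show "expected_win n N M = (\<integral>a. (\<integral>b. objects_won n a b \<partial>M) \<partial>N)"
    unfolding expected_win_def using P.integral_fst'[OF int] by simp
  show "integrable N (\<lambda>a. (\<integral>b. objects_won n a b \<partial>M))"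
    using P.integrable_fst'[OF int] by simp
qed

lemma inner_bounds:
  assumes M: "prob_space M" "sets M = sets (bid_space n)"
    and F: "\<And>i x. i < n \<Longrightarrow> measure M {b \<in> space M. b i \<le> x} = F2 n x"
  shows "(\<integral>b. objects_won n a b \<partial>M) \<le> (\<Sum>i<n. F2 n (a i))"
    and "e > 0 \<Longrightarrow> (\<Sum>i<n. F2 n (a i - e)) \<le> (\<integral>b. objects_won n a b \<partial>M)"
proof -
  interpret prob_space M by fact
  have mc: "measurable M = measurable (bid_space n)"
    by (rule ext measurable_cong_sets[OF M(2) refl])+
  have sets: "{b \<in> space M. b i \<le> x} \<in> sets M" if "i < n" for i x
  proof -
    have "Measurable.pred (bid_space n) (\<lambda>b. b i \<le> x)"
    proof -
      have [measurable]: "i \<in> {..<n}" using that by simp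
      show ?thesis unfolding bid_space_def by measurable
    qed
    then have "Measurable.pred M (\<lambda>b. b i \<le> x)" by (simp add: mc)
    then show ?thesis by (simp add: pred_def)
  qed
  have intow: "integrable M (\<lambda>b. objects_won n a b)"
    by (rule integrable_const_bound[where B="real n"]) (use ow_bounds ow_meas2 in \<open>auto simp: mc\<close>)
  have intind: "integrable M (\<lambda>b. \<Sum>i<n. indicator {b \<in> space M. b i \<le> x i} b :: real)" for x
    apply (rule Bochner_Integration.integrable_sum)
    apply (rule integrable_real_indicator)
    using sets apply simp
    apply (simp add: emeasure_eq_measure)
    done
  have intsum: "(\<integral>b. (\<Sum>i<n. indicator {b \<in> space M. b i \<le> x i} b :: real) \<partial>M) = (\<Sum>i<n. F2 n (x i))" for x
  proof -
    have "(\<integral>b. (\<Sum>i<n. indicator {b \<in> space M. b i \<le> x i} b :: real) \<partial>M)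
       = (\<Sum>i<n. (\<integral>b. indicator {b \<in> space M. b i \<le> x i} b \<partial>M))"
      using sets by (intro Bochner_Integration.integral_sum integrable_real_indicator) (auto simp: emeasure_eq_measure)
    also have "\<dots> = (\<Sum>i<n. F2 n (x i))"
      by (intro sum.cong refl) (simp add: F Int_absorb2)
    finally show ?thesis .
  qed
  show "(\<integral>b. objects_won n a b \<partial>M) \<le> (\<Sum>i<n. F2 n (a i))"
  proof -
    have "(\<integral>b. objects_won n a b \<partial>M) \<le> (\<integral>b. (\<Sum>i<n. indicator {b \<in> space M. b i \<le> a i} b :: real) \<partial>M)"
    proof (rule integral_mono[OF intow intind])
      fix b assume "b \<in> space M"
      then show "objects_won n a b \<le> (\<Sum>i<n. indicator {b \<in> space M. b i \<le> a i} b)"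
        unfolding objects_won_def by (intro sum_mono) (auto simp: indicator_def)
    qed
    then show ?thesis using intsum by simp
  qed
  assume that: "e > 0"
  show "(\<Sum>i<n. F2 n (a i - e)) \<le> (\<integral>b. objects_won n a b \<partial>M)"
  proof -
    have "(\<integral>b. (\<Sum>i<n. indicator {b \<in> space M. b i \<le> a i - e} b :: real) \<partial>M) \<le> (\<integral>b. objects_won n a b \<partial>M)"
    proof (rule integral_mono[OF intind intow])
      fix b assume "b \<in> space M"
      then show "(\<Sum>i<n. indicator {b \<in> space M. b i \<le> a i - e} b) \<le> objects_won n a b"
        unfolding objects_won_def using that by (intro sum_mono) (auto simp: indicator_def)
    qed
    then show ?thesis using intsum[of "\<lambda>i. a i - e"] by simp
  qed
qed

lemma F2_le: "0 \<le> x \<Longrightarrow> n \<ge> 1 \<Longrightarrow> F2 n x \<le> real n / 2 * x"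
  unfolding F2_def by (auto simp: field_simps)

lemma F2_mid: "0 \<le> x \<Longrightarrow> x \<le> 2 / real n \<Longrightarrow> F2 n x = real n / 2 * x"
  unfolding F2_def by auto

theorem lemma2p2:
  fixes n :: nat and M :: "(nat \<Rightarrow> real) measure"
  assumes "n \<ge> 2"
    and "prob_space M"
    and "sets M = sets (bid_space n)"
    and "AE b in M. (\<Sum>i<n. b i) = 1"
    and "\<And>i x. i < n \<Longrightarrow> measure M {b \<in> space M. b i \<le> x} = F2 n x"
  shows "(\<forall>N. A_strategy n N \<longrightarrow> expected_win n N M \<le> real n / 2) \<and>
         (\<exists>N. A_strategy n N \<and> expected_win n N M = real n / 2)"
proof
  note ib = inner_bounds[OF assms(2,3,5)]
  have n1: "n \<ge> 1" using assms(1) by simp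
  have gup: "(\<integral>b. objects_won n a b \<partial>M) \<le> real n / 2 * (\<Sum>i<n. a i)" if "\<forall>i<n. 0 < a i" for a
  proof -
    have "(\<integral>b. objects_won n a b \<partial>M) \<le> (\<Sum>i<n. F2 n (a i))" by (rule ib(1))
    also have "\<dots> \<le> (\<Sum>i<n. real n / 2 * a i)"
      using that n1 by (intro sum_mono F2_le) auto
    finally show ?thesis by (simp add: sum_distrib_left)
  qed
  show "\<forall>N. A_strategy n N \<longrightarrow> expected_win n N M \<le> real n / 2"
  proof (intro allI impI)
    fix N assume A: "A_strategy n N"
    then have N: "prob_space N" "sets N = sets (bid_space n)"
      and ae: "AE a in N. (\<forall>i<n. 0 < a i) \<and> (\<Sum>i<n. a i) \<le> 1"
      unfolding A_strategy_def by auto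
    note fb = fubini[OF N assms(2,3)]
    have "AE a in N. (\<integral>b. objects_won n a b \<partial>M) \<le> real n / 2"
      using ae
    proof eventually_elim
      case (elim a)
      then have "(\<integral>b. objects_won n a b \<partial>M) \<le> real n / 2 * (\<Sum>i<n. a i)" using gup by blast
      also have "\<dots> \<le> real n / 2 * 1" using elim by (intro mult_left_mono) auto
      finally show ?case by simp
    qed
    then have "(\<integral>a. (\<integral>b. objects_won n a b \<partial>M) \<partial>N) \<le> (\<integral>a. real n / 2 \<partial>N)"
      using fb(2) N(1) by (intro integral_mono_AE) (auto intro: finite_measure.integrable_const prob_space.finite_measure)
    also have "\<dots> = real n / 2" using prob_space.prob_space[OF N(1)] by simp
    finally show "expected_win n N M \<le> real n / 2" using fb(1) by simp
  qed
  define a0 where "a0 = restrict (\<lambda>_. 1 / real n) {..<n}"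
  define N0 where "N0 = return (bid_space n) a0"
  have a0sp: "a0 \<in> space (bid_space n)"
    unfolding a0_def bid_space_def space_PiM by auto
  have N0: "prob_space N0" "sets N0 = sets (bid_space n)"
    unfolding N0_def using a0sp by (auto intro: prob_space_return)
  have predm: "Measurable.pred (bid_space n) (\<lambda>a. (\<forall>i\<in>{..<n}. 0 < a i) \<and> (\<Sum>i<n. a i) \<le> 1)"
    unfolding bid_space_def by measurable
  have "AE a in N0. (\<forall>i\<in>{..<n}. 0 < a i) \<and> (\<Sum>i<n. a i) \<le> 1"
    unfolding N0_def using a0sp predm n1
    by (subst AE_return) (auto simp: a0_def)
  then have AN0: "A_strategy n N0"
  proof -
    have "(\<lambda>a::nat\<Rightarrow>real. (\<forall>i\<in>{..<n}. 0 < a i) \<and> (\<Sum>i<n. a i) \<le> 1) = (\<lambda>a. (\<forall>i<n. 0 < a i) \<and> (\<Sum>i<n. a i) \<le> 1)"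
      by auto
    with \<open>AE a in N0. (\<forall>i\<in>{..<n}. 0 < a i) \<and> (\<Sum>i<n. a i) \<le> 1\<close>
    have "AE a in N0. (\<forall>i<n. 0 < a i) \<and> (\<Sum>i<n. a i) \<le> 1" by (simp only:)
    then show ?thesis unfolding A_strategy_def using N0 by blast
  qed
  note fb = fubini[OF N0 assms(2,3)]
  have gm: "(\<lambda>a. \<integral>b. objects_won n a b \<partial>M) \<in> borel_measurable N0"
    using fb(2) by auto
  have ew: "expected_win n N0 M = (\<integral>b. objects_won n a0 b \<partial>M)"
    using fb(1) gm a0sp unfolding N0_def by (simp add: integral_return)
  have a0i: "a0 i = 1 / real n" if "i < n" for i using that by (simp add: a0_def)
  have up: "(\<integral>b. objects_won n a0 b \<partial>M) \<le> real n / 2"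
  proof -
    have "(\<integral>b. objects_won n a0 b \<partial>M) \<le> real n / 2 * (\<Sum>i<n. a0 i)"
      using n1 by (intro gup) (auto simp: a0i)
    also have "(\<Sum>i<n. a0 i) = 1" using n1 by (simp add: a0i)
    finally show ?thesis by simp
  qed
  have lo: "real n / 2 \<le> (\<integral>b. objects_won n a0 b \<partial>M)"
  proof (rule field_le_epsilon)
    fix d :: real assume d: "0 < d"
    define e where "e = min (1 / (2 * real n)) (d / (real n)^2)"
    have e0: "0 < e" using d n1 unfolding e_def by auto
    have e1: "e \<le> 1 / (2 * real n)" and e2: "e \<le> d / (real n)^2" unfolding e_def by auto
    have "0 \<le> 1 / real n - e" using e1 n1 by (auto simp: field_simps)
    moreover have "1 / real n - e \<le> 2 / real n" using e0 n1 by (auto simp: field_simps)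
    ultimately have F: "F2 n (a0 i - e) = real n / 2 * (1 / real n - e)" if "i < n" for i
      using that by (simp add: a0i F2_mid)
    have "(\<Sum>i<n. F2 n (a0 i - e)) = real n * (real n / 2 * (1 / real n - e))"
      by (simp add: F)
    also have "\<dots> = real n / 2 - (real n)^2 * e / 2" using n1 by (simp add: field_simps power2_eq_square)
    finally have "real n / 2 - (real n)^2 * e / 2 \<le> (\<integral>b. objects_won n a0 b \<partial>M)"
      using inner_bounds(2)[OF assms(2,3) assms(5) e0, of a0] by simp
    moreover have "(real n)^2 * e \<le> d" using e2 n1 by (simp add: field_simps)
    ultimately show "real n / 2 \<le> (\<integral>b. objects_won n a0 b \<partial>M) + d" using d by linarith
  qed
  show "\<exists>N. A_strategy n N \<and> expected_win n N M = real n / 2"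
    using AN0 ew up lo by auto
qed

end
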